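(* For a multi-unit auction with $m\ge2$ identical items and $n\ge2$ unknown single-minded bidders, no randomized mechanism that is (universally) obviously strategy-proof and satisfies individual rationality and no negative transfers has approximation better than $\frac{6}{5}$; i.e., every such mechanism has $\sup_v\mathrm{OPT}(v)/\mathbb{E}[W(v)]\ge 6/5$.
   Context: A multi-unit auction: bidder $i$'s valuation is $v_i:\{0,\dots,m\}\to\mathbb{R}_{\ge0}$. It is single-minded if there are $x_i\ge0$, $d_i\in\{1,\dots,m\}$ with $v_i(q)=x_i$ for $q\ge d_i$ and $0$ otherwise; unknown single-minded means both $x_i,d_i$ are private, so the domain $V_i$ is all single-minded valuations. Utilities are quasi-linear. A deterministic mechanism is a rooted tree: each internal node is assigned to one bidder, who sends one of the messages labeling the outgoing edges; each leaf is labeled with a feasible allocation (quantities summing to at most $m$) and a payment for each bidder. A behavior $B_i$ specifies a message at every node of bidder $i$; a profile $B$ determines a path $\mathrm{Path}(B)$ with allocation $f_i(B)$ and payment $p_i(B)$ for $i$. A strategy $\mathcal S_i$ maps each $v_i\in V_i$ to a behavior; it is obviously dominant if for every $v_i\in V_i$, every node $u$ of $i$, every $B_{-i}$ and every profile $B'$ with $u\in\mathrm{Path}(\mathcal S_i(v_i),B_{-i})\cap\mathrm{Path}(B')$ and $B'_i$ sending at $u$ a message different from $\mathcal S_i(v_i)$'s, $v_i(f_i(\mathcal S_i(v_i),B_{-i}))-p_i(\mathcal S_i(v_i),B_{-i})\ge v_i(f_i(B'))-p_i(B')$. A randomized mechanism is a probability distribution over deterministic mechanisms each with strategies; it is universally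 OSP if each mechanism in its support is OSP. Individual rationality: in every mechanism of the support and for every profile in $\prod_iV_i$, following the strategies yields each bidder utility $\ge0$. No negative transfers: all payments at all leaves of all mechanisms in the support are $\ge0$. $\mathbb{E}[W(v)]$ is the expected welfare when bidders follow their strategies on profile $v$; $\mathrm{OPT}(v)$ is the optimal welfare. *)

theory Defs
  imports "HOL-Probability.Probability"
begin

(* Bidders are 0..<n.  A single-minded valuation is a function nat => real. *)
definition single_minded :: "nat \<Rightarrow> (nat \<Rightarrow> real) \<Rightarrow> bool" where
  "single_minded m v \<longleftrightarrow>
     (\<exists>x d. x \<ge> 0 \<and> 1 \<le> d \<and> d \<le> m \<and> (\<forall>q. v q = (if d \<le> q then x else 0)))"

(* Deterministic mechanism: a (well-founded, arbitrarily branching) tree.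
   Leaf f p: allocation f i and payment p i for bidder i.
   Node i Ms c: bidder i sends a message x \<in> Ms, and the game continues at c x. *)
datatype 'msg mech = Leaf "nat \<Rightarrow> nat" "nat \<Rightarrow> real" | Node nat "'msg set" "'msg \<Rightarrow> 'msg mech"

(* nodes are identified by their address = the message history from the root *)
type_synonym 'msg behavior = "'msg list \<Rightarrow> 'msg"
type_synonym 'msg profile = "nat \<Rightarrow> 'msg behavior"
type_synonym 'msg strategy = "nat \<Rightarrow> (nat \<Rightarrow> real) \<Rightarrow> 'msg behavior"

primrec subtree :: "'msg mech \<Rightarrow> 'msg list \<Rightarrow> 'msg mech option" where
  "subtree T [] = Some T"
| "subtree T (x # u) = (case T of Leaf f p \<Rightarrow> None
                          | Node i Ms c \<Rightarrow> if x \<in> Ms then subtree (c x) u else None)"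

primrec outcome :: "'msg mech \<Rightarrow> 'msg profile \<Rightarrow> 'msg list \<Rightarrow> (nat \<Rightarrow> nat) \<times> (nat \<Rightarrow> real)" where
  "outcome (Leaf f p) B h = (f, p)"
| "outcome (Node i Ms c) B h = outcome (c (B i h)) B (h @ [B i h])"

primrec path :: "'msg mech \<Rightarrow> 'msg profile \<Rightarrow> 'msg list \<Rightarrow> 'msg list set" where
  "path (Leaf f p) B h = {h}"
| "path (Node i Ms c) B h = insert h (path (c (B i h)) B (h @ [B i h]))"

definition owner_at :: "'msg mech \<Rightarrow> 'msg list \<Rightarrow> nat \<Rightarrow> bool" where
  "owner_at T u i \<longleftrightarrow> (\<exists>Ms c. subtree T u = Some (Node i Ms c))"

definition valid_behavior :: "'msg mech \<Rightarrow> nat \<Rightarrow> 'msg behavior \<Rightarrow> bool" where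
  "valid_behavior T i b \<longleftrightarrow> (\<forall>u Ms c. subtree T u = Some (Node i Ms c) \<longrightarrow> b u \<in> Ms)"

definition valid_profile :: "nat \<Rightarrow> 'msg mech \<Rightarrow> 'msg profile \<Rightarrow> bool" where
  "valid_profile n T B \<longleftrightarrow> (\<forall>j<n. valid_behavior T j (B j))"

definition wf_mech :: "nat \<Rightarrow> nat \<Rightarrow> 'msg mech \<Rightarrow> bool" where
  "wf_mech n m T \<longleftrightarrow>
     (\<forall>u i Ms c. subtree T u = Some (Node i Ms c) \<longrightarrow> i < n \<and> Ms \<noteq> {}) \<and>
     (\<forall>u f p. subtree T u = Some (Leaf f p) \<longrightarrow> (\<Sum>i<n. f i) \<le> m)"

definition util :: "(nat \<Rightarrow> real) \<Rightarrow> 'msg mech \<Rightarrow> 'msg profile \<Rightarrow> nat \<Rightarrow> real" where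
  "util v T B i = v (fst (outcome T B []) i) - snd (outcome T B []) i"

definition valid_strategies :: "nat \<Rightarrow> nat \<Rightarrow> 'msg mech \<Rightarrow> 'msg strategy \<Rightarrow> bool" where
  "valid_strategies n m T S \<longleftrightarrow>
     (\<forall>i<n. \<forall>v. single_minded m v \<longrightarrow> valid_behavior T i (S i v))"

definition osp :: "nat \<Rightarrow> nat \<Rightarrow> 'msg mech \<Rightarrow> 'msg strategy \<Rightarrow> bool" where
  "osp n m T S \<longleftrightarrow>
     (\<forall>i<n. \<forall>v. single_minded m v \<longrightarrow>
        (\<forall>u. owner_at T u i \<longrightarrow>
          (\<forall>B B'. valid_profile n T B \<longrightarrow> valid_profile n T B' \<longrightarrow>
             u \<in> path T (B(i := S i v)) [] \<longrightarrow> u \<in> path T B' [] \<longrightarrow>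
             B' i u \<noteq> S i v u \<longrightarrow>
             util v T B' i \<le> util v T (B(i := S i v)) i)))"

definition play :: "'msg strategy \<Rightarrow> (nat \<Rightarrow> nat \<Rightarrow> real) \<Rightarrow> 'msg profile" where
  "play S vs = (\<lambda>j. S j (vs j))"

definition indiv_rational :: "nat \<Rightarrow> nat \<Rightarrow> 'msg mech \<Rightarrow> 'msg strategy \<Rightarrow> bool" where
  "indiv_rational n m T S \<longleftrightarrow>
     (\<forall>vs. (\<forall>i<n. single_minded m (vs i)) \<longrightarrow> (\<forall>i<n. util (vs i) T (play S vs) i \<ge> 0))"

definition no_negative_transfers :: "nat \<Rightarrow> 'msg mech \<Rightarrow> bool" where
  "no_negative_transfers n T \<longleftrightarrow>
     (\<forall>u f p. subtree T u = Some (Leaf f p) \<longrightarrow> (\<forall>i<n. p i \<ge> 0))"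

definition good_mech :: "nat \<Rightarrow> nat \<Rightarrow> 'msg mech \<Rightarrow> 'msg strategy \<Rightarrow> bool" where
  "good_mech n m T S \<longleftrightarrow> wf_mech n m T \<and> valid_strategies n m T S \<and> osp n m T S \<and>
     indiv_rational n m T S \<and> no_negative_transfers n T"

definition welfare :: "nat \<Rightarrow> 'msg mech \<Rightarrow> 'msg strategy \<Rightarrow> (nat \<Rightarrow> nat \<Rightarrow> real) \<Rightarrow> real" where
  "welfare n T S vs = (\<Sum>i<n. vs i (fst (outcome T (play S vs) []) i))"

definition opt :: "nat \<Rightarrow> nat \<Rightarrow> (nat \<Rightarrow> nat \<Rightarrow> real) \<Rightarrow> real" where
  "opt n m vs = Sup {\<Sum>i<n. vs i (q i) | q. (\<Sum>i<n. q i) \<le> m}"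

end

theory Submission
  imports Defs
begin

lemma path_self: "h \<in> path t B h" by (cases t) auto

lemma path_prefix: "u \<in> path t B h \<Longrightarrow> \<exists>w. u = h @ w"
proof (induction t arbitrary: h)
  case (Leaf f p) then show ?case by auto
next
  case (Node i Ms c)
  then show ?case
    by (auto, metis append.assoc append_Cons append_Nil rangeI)
qed

lemma path_sub:
  "h0 @ h \<in> path T B h0 \<Longrightarrow> subtree T h = Some t \<Longrightarrow>
   path t B (h0 @ h) \<subseteq> path T B h0 \<and> outcome t B (h0 @ h) = outcome T B h0"
proof (induction T arbitrary: h0 h)
  case (Leaf f p) then show ?case by (cases h) auto
next
  case (Node i Ms c)
  show ?case
  proof (cases h)
    case Nil then show ?thesis using Node.prems by auto
  next
    case (Cons y h')
    let ?x = "B i h0"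
    have "h0 @ h \<in> path (c ?x) B (h0 @ [?x])" using Node.prems Cons by auto
    then obtain w where w: "h0 @ h = (h0 @ [?x]) @ w" using path_prefix by blast
    hence yx: "y = ?x" and hw: "h' = w" using Cons by auto
    have sub: "subtree (c ?x) h' = Some t" and xin: "?x \<in> Ms"
      using Node.prems(2) Cons yx by (auto split: if_splits)
    have "(h0 @ [?x]) @ h' \<in> path (c ?x) B (h0 @ [?x])"
      using \<open>h0 @ h \<in> path (c ?x) B (h0 @ [?x])\<close> Cons yx by simp
    from Node.IH[OF rangeI this sub]
    show ?thesis using Cons yx by auto
  qed
qed

lemma subtree_snoc:
  "subtree T h = Some (Node i Ms c) \<Longrightarrow> x \<in> Ms \<Longrightarrow> subtree T (h @ [x]) = Some (c x)"
proof (induction h arbitrary: T)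
  case Nil then show ?case by auto
next
  case (Cons y h) then show ?case by (cases T) (auto split: if_splits)
qed

lemma reach_leaf:
  "(\<forall>u i Ms c. subtree T u = Some (Node i Ms c) \<longrightarrow> B i (h @ u) \<in> Ms) \<Longrightarrow>
   \<exists>u. subtree T u = Some (Leaf (fst (outcome T B h)) (snd (outcome T B h)))"
proof (induction T arbitrary: h)
  case (Leaf f p)
  then show ?case by (intro exI[of _ "[]"]) auto
next
  case (Node i Ms c)
  let ?x = "B i h"
  have xin: "?x \<in> Ms" using Node.prems[rule_format, of "[]"] by auto
  have "\<forall>u j Ms' c'. subtree (c ?x) u = Some (Node j Ms' c') \<longrightarrow> B j ((h @ [?x]) @ u) \<in> Ms'"
  proof (intro allI impI)
    fix u j Ms' c' assume "subtree (c ?x) u = Some (Node j Ms' c')"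
    hence "subtree (Node i Ms c) (?x # u) = Some (Node j Ms' c')" using xin by simp
    from Node.prems[rule_format, OF this] show "B j ((h @ [?x]) @ u) \<in> Ms'" by simp
  qed
  from Node.IH[OF rangeI this] obtain u where
    "subtree (c ?x) u = Some (Leaf (fst (outcome (c ?x) B (h @ [?x]))) (snd (outcome (c ?x) B (h @ [?x]))))"
    by blast
  then show ?case using xin by (intro exI[of _ "?x # u"]) auto
qed


definition sm :: "real \<Rightarrow> nat \<Rightarrow> nat \<Rightarrow> real" where
  "sm x d = (\<lambda>q. if d \<le> q then x else 0)"

definition prof :: "(nat \<Rightarrow> real) \<Rightarrow> (nat \<Rightarrow> real) \<Rightarrow> nat \<Rightarrow> nat \<Rightarrow> real" where
  "prof a b = (\<lambda>i. if i = 0 then a else if i = 1 then b else sm 0 1)"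

lemma sm_single: "0 \<le> x \<Longrightarrow> 1 \<le> d \<Longrightarrow> d \<le> m \<Longrightarrow> single_minded m (sm x d)"
  unfolding single_minded_def sm_def by blast

lemma prof_single: "single_minded m a \<Longrightarrow> single_minded m b \<Longrightarrow> 1 \<le> m \<Longrightarrow>
   \<forall>i<n. single_minded m (prof a b i)"
  using sm_single[of 0 1 m] by (auto simp: prof_def)

lemma sum_two_nat: "2 \<le> (n::nat) \<Longrightarrow> (f 0 + f 1 :: nat) \<le> (\<Sum>i<n. f i)"
proof -
  assume "2 \<le> n"
  hence "{0,1} \<subseteq> {..<n}" by auto
  hence "(\<Sum>i\<in>{0,1}. f i) \<le> (\<Sum>i<n. f i)" by (intro sum_mono2) auto
  thus ?thesis by simp
qed

lemma sum_prof: "2 \<le> (n::nat) \<Longrightarrow> (\<Sum>i<n. prof a b i (q i)) = a (q 0) + b (q 1)"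
proof -
  assume "2 \<le> n"
  hence "(\<Sum>i<n. prof a b i (q i)) = (\<Sum>i\<in>{0,1}. prof a b i (q i))"
    by (intro sum.mono_neutral_right) (auto simp: prof_def sm_def)
  thus ?thesis by (simp add: prof_def)
qed

lemma good_valid: "good_mech n m T S \<Longrightarrow> \<forall>j<n. single_minded m (P j) \<Longrightarrow>
   valid_profile n T (play S P)"
  unfolding good_mech_def valid_strategies_def valid_profile_def play_def by auto

lemma good_leaf:
  assumes "good_mech n m T S" "\<forall>j<n. single_minded m (P j)"
  shows "(\<Sum>i<n. fst (outcome T (play S P) []) i) \<le> m \<and> (\<forall>i<n. 0 \<le> snd (outcome T (play S P) []) i)"
proof -
  have v: "valid_profile n T (play S P)" using good_valid assms by blast
  have "\<forall>u i Ms c. subtree T u = Some (Node i Ms c) \<longrightarrow> play S P i ([] @ u) \<in> Ms"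
  proof (intro allI impI)
    fix u i Ms c assume a: "subtree T u = Some (Node i Ms c)"
    hence "i < n" using assms(1) unfolding good_mech_def wf_mech_def by blast
    with v a show "play S P i ([] @ u) \<in> Ms"
      unfolding valid_profile_def valid_behavior_def by auto
  qed
  from reach_leaf[OF this] obtain u where
    "subtree T u = Some (Leaf (fst (outcome T (play S P) [])) (snd (outcome T (play S P) [])))"
    by blast
  thus ?thesis using assms(1) unfolding good_mech_def wf_mech_def no_negative_transfers_def
    by blast
qed

lemma good_ir: "good_mech n m T S \<Longrightarrow> \<forall>j<n. single_minded m (P j) \<Longrightarrow> i < n \<Longrightarrow>
   0 \<le> util (P i) T (play S P) i"
  unfolding good_mech_def indiv_rational_def by blast

lemma osp_pair:
  assumes good: "good_mech n m T S" and sP: "\<forall>j<n. single_minded m (P j)"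
    and sQ: "\<forall>j<n. single_minded m (Q j)" and i: "i < n"
    and sub: "subtree T h = Some (Node i Ms c)"
    and hP: "h \<in> path T (play S P) []" and hQ: "h \<in> path T (play S Q) []"
    and ne: "play S Q i h \<noteq> play S P i h"
  shows "util (P i) T (play S Q) i \<le> util (P i) T (play S P) i"
proof -
  have o: "osp n m T S" using good unfolding good_mech_def by blast
  have ow: "owner_at T h i" using sub unfolding owner_at_def by blast
  have eq: "(play S P)(i := S i (P i)) = play S P" by (auto simp: play_def)
  have vP: "valid_profile n T (play S P)" and vQ: "valid_profile n T (play S Q)"
    using good_valid good sP sQ by blast+
  have sm: "single_minded m (P i)" using sP i by blast
  from o[unfolded osp_def, rule_format, OF i sm ow vP vQ] hP hQ ne eq
  show ?thesis by (simp add: play_def)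
qed


lemma prof0[simp]: "prof a b 0 = a" and prof1[simp]: "prof a b (Suc 0) = b"
  and prof2[simp]: "2 \<le> i \<Longrightarrow> prof a b i = sm 0 1"
  by (auto simp: prof_def)

lemma util_sm: "util (sm x d) T B i = (if d \<le> fst (outcome T B []) i then x else 0) - snd (outcome T B []) i"
  by (simp add: util_def sm_def)

lemma det_main:
  fixes T :: "'msg mech" and S :: "'msg strategy" and \<gamma> u g :: real
  assumes good: "good_mech n m T S" and m2: "2 \<le> m" and n2: "2 \<le> n"
    and gu: "1 < \<gamma>" "\<gamma> < u" "0 \<le> g"
    and o1: "1 \<le> fst (outcome T (play S (prof (sm 1 1) (sm 1 1))) []) 0"
            "1 \<le> fst (outcome T (play S (prof (sm 1 1) (sm 1 1))) []) 1"
    and o2: "m \<le> fst (outcome T (play S (prof (sm u 1) (sm g m))) []) 1"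
    and o3: "m \<le> fst (outcome T (play S (prof (sm g m) (sm u 1))) []) 0"
    and o4: "m \<le> fst (outcome T (play S (prof (sm \<gamma> m) (sm 1 1))) []) 0"
    and o5: "m \<le> fst (outcome T (play S (prof (sm 1 1) (sm \<gamma> m))) []) 1"
  shows False
proof -
  define P1 where "P1 = prof (sm 1 1) (sm 1 1)"
  define P2 where "P2 = prof (sm u 1) (sm g m)"
  define P3 where "P3 = prof (sm g m) (sm u 1)"
  define P4 where "P4 = prof (sm \<gamma> m) (sm 1 1)"
  define P5 where "P5 = prof (sm 1 1) (sm \<gamma> m)"
  note o = o1[folded P1_def] o2[folded P2_def] o3[folded P3_def] o4[folded P4_def] o5[folded P5_def]
  define Ps where "Ps = {P1,P2,P3,P4,P5}"
  have m1: "1 \<le> m" using m2 by simp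
  have smU1: "single_minded m (sm 1 1)" using sm_single[of 1 1 m] m1 by simp
  have smU2: "single_minded m (sm u 1)" using sm_single[of u 1 m] m1 gu by simp
  have smG: "single_minded m (sm g m)" using sm_single[of g m m] m1 gu by simp
  have smG': "single_minded m (sm \<gamma> m)" using sm_single[of \<gamma> m m] m1 gu by simp
  have sPs: "\<forall>j<n. single_minded m (P j)" if "P \<in> Ps" for P
    using that prof_single[OF _ _ m1] smU1 smU2 smG smG'
    unfolding Ps_def P1_def P2_def P3_def P4_def P5_def by blast
  have sP1: "\<forall>j<n. single_minded m (P1 j)" and sP2: "\<forall>j<n. single_minded m (P2 j)"
    and sP3: "\<forall>j<n. single_minded m (P3 j)" and sP4: "\<forall>j<n. single_minded m (P4 j)"
    and sP5: "\<forall>j<n. single_minded m (P5 j)" using sPs unfolding Ps_def by auto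
  have lf: "fst (outcome T (play S P) []) 0 + fst (outcome T (play S P) []) 1 \<le> m
      \<and> 0 \<le> snd (outcome T (play S P) []) 0 \<and> 0 \<le> snd (outcome T (play S P) []) 1"
    if "P \<in> Ps" for P
  proof -
    from good_leaf[OF good sPs[OF that]] sum_two_nat[OF n2, of "fst (outcome T (play S P) [])"] n2
    show ?thesis by auto
  qed
  have lf1: "0 \<le> snd (outcome T (play S P1) []) 0" "0 \<le> snd (outcome T (play S P1) []) 1"
    using lf[of P1] by (auto simp: Ps_def)
  have lf2: "fst (outcome T (play S P2) []) 0 = 0" "0 \<le> snd (outcome T (play S P2) []) 0" "0 \<le> snd (outcome T (play S P2) []) 1"
    using lf[of P2] o by (auto simp: Ps_def)
  have lf3: "fst (outcome T (play S P3) []) 1 = 0" "0 \<le> snd (outcome T (play S P3) []) 0" "0 \<le> snd (outcome T (play S P3) []) 1"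
    using lf[of P3] o by (auto simp: Ps_def)
  have lf4: "fst (outcome T (play S P4) []) 1 = 0"
    using lf[of P4] o by (auto simp: Ps_def)
  have lf5: "fst (outcome T (play S P5) []) 0 = 0"
    using lf[of P5] o by (auto simp: Ps_def)
  have ir: "0 \<le> util (P i) T (play S P) i" if "P \<in> Ps" "i < 2" for P i
    using good_ir[OF good sPs[OF that(1)]] that n2 by auto
  have ir1: "snd (outcome T (play S P1) []) 0 \<le> 1" "snd (outcome T (play S P1) []) 1 \<le> 1"
    using ir[of P1 0] ir[of P1 1] o by (auto simp: Ps_def P1_def util_sm)
  have ir4: "snd (outcome T (play S P4) []) 0 \<le> \<gamma>"
    using ir[of P4 0] o by (auto simp: Ps_def P4_def util_sm)
  have ir5: "snd (outcome T (play S P5) []) 1 \<le> \<gamma>"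
    using ir[of P5 1] o by (auto simp: Ps_def P5_def util_sm)
  have msg0: "play S P1 0 = S 0 (sm 1 1)" "play S P5 0 = S 0 (sm 1 1)"
     "play S P2 0 = S 0 (sm u 1)" "play S P3 0 = S 0 (sm g m)" "play S P4 0 = S 0 (sm \<gamma> m)"
    by (simp_all add: play_def P1_def P2_def P3_def P4_def P5_def)
  have msg1: "play S P1 1 = S 1 (sm 1 1)" "play S P4 1 = S 1 (sm 1 1)"
     "play S P3 1 = S 1 (sm u 1)" "play S P2 1 = S 1 (sm g m)" "play S P5 1 = S 1 (sm \<gamma> m)"
    by (simp_all add: play_def P1_def P2_def P3_def P4_def P5_def)
  have msg2: "play S P i = S i (sm 0 1)" if "P \<in> Ps" "2 \<le> i" for P i
    using that by (auto simp: play_def Ps_def P1_def P2_def P3_def P4_def P5_def)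
  have "False" if "subtree T h = Some t"
    "\<forall>P\<in>Ps. h \<in> path T (play S P) [] \<and> outcome t (play S P) h = outcome T (play S P) []" for t h
    using that
  proof (induction t arbitrary: h)
    case (Leaf f p)
    then have "outcome T (play S P2) [] = (f, p)" "outcome T (play S P3) [] = (f, p)"
      by (auto simp: Ps_def)
    then show False using lf2 o m2 by auto
  next
    case (Node i Ms c)
    have inn: "i < n" using Node.prems(1) good unfolding good_mech_def wf_mech_def by blast
    have pathT: "path (Node i Ms c) (play S P) h \<subseteq> path T (play S P) []" if "P \<in> Ps" for P
      using path_sub[of "[]" h T "play S P" "Node i Ms c"] Node.prems that by auto
    show False
    proof (cases "\<forall>P\<in>Ps. play S P i h = play S P1 i h")
      case True
      define x where "x = play S P1 i h"
      have "valid_profile n T (play S P1)" using good_valid[OF good sP1] .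
      hence xin: "x \<in> Ms" using Node.prems(1) inn
        unfolding valid_profile_def valid_behavior_def x_def by blast
      have sub': "subtree T (h @ [x]) = Some (c x)" using subtree_snoc[OF Node.prems(1) xin] .
      have "\<forall>P\<in>Ps. h @ [x] \<in> path T (play S P) [] \<and> outcome (c x) (play S P) (h @ [x]) = outcome T (play S P) []"
      proof
        fix P assume PP: "P \<in> Ps"
        have px: "play S P i h = x" using True PP x_def by auto
        have "h @ [x] \<in> path (Node i Ms c) (play S P) h" using px path_self by auto
        moreover have "outcome (c x) (play S P) (h @ [x]) = outcome (Node i Ms c) (play S P) h"
          using px by simp
        ultimately show "h @ [x] \<in> path T (play S P) [] \<and> outcome (c x) (play S P) (h @ [x]) = outcome T (play S P) []"
          using pathT[OF PP] Node.prems(2) PP by auto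
      qed
      from Node.IH[OF rangeI sub' this] show False .
    next
      case False
      have osp: "util (P i) T (play S Q) i \<le> util (P i) T (play S P) i"
        if "P \<in> Ps" "Q \<in> Ps" "play S Q i h \<noteq> play S P i h" for P Q
        using osp_pair[OF good sPs[OF that(1)] sPs[OF that(2)] inn Node.prems(1)] that Node.prems(2)
        by blast
      have P1in: "P1 \<in> Ps" and P2in: "P2 \<in> Ps" and P3in: "P3 \<in> Ps" and P4in: "P4 \<in> Ps" and P5in: "P5 \<in> Ps"
        by (auto simp: Ps_def)
      have "i = 0 \<or> i = 1"
      proof (rule ccontr)
        assume "\<not> (i = 0 \<or> i = 1)"
        hence "2 \<le> i" by auto
        thus False using False msg2 P1in by auto
      qed
      then show False
      proof
        assume i0: "i = 0"
        have ne: "\<not> (S 0 (sm u 1) h = S 0 (sm 1 1) h \<and> S 0 (sm g m) h = S 0 (sm 1 1) h \<and> S 0 (sm \<gamma> m) h = S 0 (sm 1 1) h)"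
          using False i0 msg0 unfolding Ps_def by auto
        show False
        proof (cases "S 0 (sm u 1) h = S 0 (sm 1 1) h")
          case False
          have "util (P2 0) T (play S P1) 0 \<le> util (P2 0) T (play S P2) 0"
            using osp[OF P2in P1in] False i0 msg0 by auto
          then show False using o lf2 ir1 gu by (simp add: P2_def util_sm)
        next
          case a12: True
          show False
          proof (cases "S 0 (sm \<gamma> m) h = S 0 (sm 1 1) h")
            case False
            have "util (P2 0) T (play S P4) 0 \<le> util (P2 0) T (play S P2) 0"
              using osp[OF P2in P4in] False a12 i0 msg0 by auto
            then show False using o lf2 ir4 gu m2 by (simp add: P2_def util_sm)
          next
            case a14: True
            have a13: "S 0 (sm g m) h \<noteq> S 0 (sm 1 1) h" using ne a12 a14 by auto
            have A: "util (P2 0) T (play S P3) 0 \<le> util (P2 0) T (play S P2) 0"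
              using osp[OF P2in P3in] a12 a13 i0 msg0 by auto
            have B: "util (P3 0) T (play S P4) 0 \<le> util (P3 0) T (play S P3) 0"
              using osp[OF P3in P4in] a13 a14 i0 msg0 by auto
            show False using A B o lf2 ir4 gu m2 by (simp add: P2_def P3_def util_sm)
          qed
        qed
      next
        assume i1: "i = 1"
        have ne: "\<not> (S 1 (sm u 1) h = S 1 (sm 1 1) h \<and> S 1 (sm g m) h = S 1 (sm 1 1) h \<and> S 1 (sm \<gamma> m) h = S 1 (sm 1 1) h)"
          using False i1 msg1 unfolding Ps_def by auto
        show False
        proof (cases "S 1 (sm u 1) h = S 1 (sm 1 1) h")
          case False
          have "util (P3 1) T (play S P1) 1 \<le> util (P3 1) T (play S P3) 1"
            using osp[OF P3in P1in] False i1 msg1 by auto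
          then show False using o lf3 ir1 gu by (simp add: P3_def util_sm)
        next
          case a12: True
          show False
          proof (cases "S 1 (sm \<gamma> m) h = S 1 (sm 1 1) h")
            case False
            have "util (P3 1) T (play S P5) 1 \<le> util (P3 1) T (play S P3) 1"
              using osp[OF P3in P5in] False a12 i1 msg1 by auto
            then show False using o lf3 ir5 gu m2 by (simp add: P3_def util_sm)
          next
            case a14: True
            have a13: "S 1 (sm g m) h \<noteq> S 1 (sm 1 1) h" using ne a12 a14 by auto
            have A: "util (P3 1) T (play S P2) 1 \<le> util (P3 1) T (play S P3) 1"
              using osp[OF P3in P2in] a12 a13 i1 msg1 by auto
            have B: "util (P2 1) T (play S P5) 1 \<le> util (P2 1) T (play S P2) 1"
              using osp[OF P2in P5in] a13 a14 i1 msg1 by auto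
            show False using A B o lf3 ir5 gu m2 by (simp add: P2_def P3_def util_sm)
          qed
        qed
      qed
    qed
  qed
  moreover have "subtree T [] = Some T" by simp
  moreover have "\<forall>P\<in>Ps. [] \<in> path T (play S P) [] \<and> outcome T (play S P) [] = outcome T (play S P) []"
    using path_self by blast
  ultimately show False by blast
qed


lemma sm_bounds: "single_minded m v \<Longrightarrow> \<exists>B. \<forall>q. 0 \<le> v q \<and> v q \<le> B"
  unfolding single_minded_def by (metis order_refl)

lemma sum_two_eq: "2 \<le> (n::nat) \<Longrightarrow> (\<forall>i\<ge>2. (q::nat\<Rightarrow>nat) i = 0) \<Longrightarrow> (\<Sum>i<n. q i) = q 0 + (q 1 :: nat)"
proof -
  assume "2 \<le> n" "\<forall>i\<ge>2. q i = 0"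
  hence "(\<Sum>i<n. q i) = (\<Sum>i\<in>{0,1}. q i)"
    by (intro sum.mono_neutral_right) auto
  thus ?thesis by simp
qed

lemma opt_ge:
  fixes q :: "nat \<Rightarrow> nat"
  assumes n2: "2 \<le> n" and sa: "single_minded m a" and sb: "single_minded m b"
    and q2: "\<forall>i\<ge>2. q i = 0" and qm: "q 0 + q 1 \<le> m"
  shows "a (q 0) + b (q 1) \<le> opt n m (prof a b)"
proof -
  obtain Ba where Ba: "\<forall>q. 0 \<le> a q \<and> a q \<le> Ba" using sm_bounds[OF sa] by blast
  obtain Bb where Bb: "\<forall>q. 0 \<le> b q \<and> b q \<le> Bb" using sm_bounds[OF sb] by blast
  let ?X = "{\<Sum>i<n. prof a b i (q i) | q. (\<Sum>i<n. q i) \<le> m}"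
  have mem: "a (q 0) + b (q 1) \<in> ?X"
    using sum_prof[OF n2, of a b q] sum_two_eq[OF n2 q2] qm by (intro CollectI exI[of _ q]) auto
  have bdd: "bdd_above ?X"
  proof (rule bdd_aboveI)
    fix x assume "x \<in> ?X"
    then obtain q' where "x = (\<Sum>i<n. prof a b i (q' i))" by blast
    hence "x = a (q' 0) + b (q' 1)" using sum_prof[OF n2] by simp
    thus "x \<le> Ba + Bb" using Ba Bb by (simp add: add_mono)
  qed
  show ?thesis unfolding opt_def using cSup_upper[OF mem bdd] .
qed

lemma welfare_prof: "2 \<le> n \<Longrightarrow> welfare n T S (prof a b) =
   a (fst (outcome T (play S (prof a b)) []) 0) + b (fst (outcome T (play S (prof a b)) []) 1)"
  by (simp add: welfare_def sum_prof)

lemma leaf_sum: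
  assumes "good_mech n m T S" "single_minded m a" "single_minded m b" "2 \<le> n" "1 \<le> m"
  shows "fst (outcome T (play S (prof a b)) []) 0 + fst (outcome T (play S (prof a b)) []) 1 \<le> m"
  using good_leaf[OF assms(1) prof_single[OF assms(2,3,5)]]
    sum_two_nat[OF assms(4), of "fst (outcome T (play S (prof a b)) [])"] by linarith

lemma mech_facts:
  fixes \<gamma> u g :: real
  assumes good: "good_mech n m T S" and m2: "2 \<le> m" and n2: "2 \<le> n"
    and gu: "1 < \<gamma>" "\<gamma> < u" "u < g"
  defines "W1 \<equiv> welfare n T S (prof (sm 1 1) (sm 1 1))"
    and "W2 \<equiv> welfare n T S (prof (sm u 1) (sm g m))"
    and "W3 \<equiv> welfare n T S (prof (sm g m) (sm u 1))"
    and "W4 \<equiv> welfare n T S (prof (sm \<gamma> m) (sm 1 1))"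
    and "W5 \<equiv> welfare n T S (prof (sm 1 1) (sm \<gamma> m))"
  shows "0 \<le> W1 \<and> W1 \<le> 2 \<and> 0 \<le> W2 \<and> W2 \<le> g \<and> 0 \<le> W3 \<and> W3 \<le> g \<and>
         0 \<le> W4 \<and> W4 \<le> \<gamma> \<and> 0 \<le> W5 \<and> W5 \<le> \<gamma> \<and>
         (W1 \<le> 1 \<or> W2 \<le> u \<or> W3 \<le> u \<or> W4 \<le> 1 \<or> W5 \<le> 1)"
proof -
  have m1: "1 \<le> m" using m2 by simp
  have smU1: "single_minded m (sm 1 1)" using sm_single[of 1 1 m] m1 by simp
  have smU2: "single_minded m (sm u 1)" using sm_single[of u 1 m] m1 gu by simp
  have smG: "single_minded m (sm g m)" using sm_single[of g m m] m1 gu by simp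
  have smG': "single_minded m (sm \<gamma> m)" using sm_single[of \<gamma> m m] m1 gu by simp
  define f1 where "f1 = fst (outcome T (play S (prof (sm 1 1) (sm 1 1))) [])"
  define f2 where "f2 = fst (outcome T (play S (prof (sm u 1) (sm g m))) [])"
  define f3 where "f3 = fst (outcome T (play S (prof (sm g m) (sm u 1))) [])"
  define f4 where "f4 = fst (outcome T (play S (prof (sm \<gamma> m) (sm 1 1))) [])"
  define f5 where "f5 = fst (outcome T (play S (prof (sm 1 1) (sm \<gamma> m))) [])"
  have s2: "f2 0 + f2 1 \<le> m" unfolding f2_def by (rule leaf_sum[OF good smU2 smG n2 m1])
  have s3: "f3 0 + f3 1 \<le> m" unfolding f3_def by (rule leaf_sum[OF good smG smU2 n2 m1])
  have s4: "f4 0 + f4 1 \<le> m" unfolding f4_def by (rule leaf_sum[OF good smG' smU1 n2 m1])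
  have s5: "f5 0 + f5 1 \<le> m" unfolding f5_def by (rule leaf_sum[OF good smU1 smG' n2 m1])
  have w1: "W1 = (if 1 \<le> f1 0 then 1 else 0) + (if 1 \<le> f1 1 then 1 else 0)"
    unfolding W1_def f1_def by (simp add: welfare_prof[OF n2] sm_def)
  have w2: "W2 = (if 1 \<le> f2 0 then u else 0) + (if m \<le> f2 1 then g else 0)"
    unfolding W2_def f2_def by (simp add: welfare_prof[OF n2] sm_def)
  have w3: "W3 = (if m \<le> f3 0 then g else 0) + (if 1 \<le> f3 1 then u else 0)"
    unfolding W3_def f3_def by (simp add: welfare_prof[OF n2] sm_def)
  have w4: "W4 = (if m \<le> f4 0 then \<gamma> else 0) + (if 1 \<le> f4 1 then 1 else 0)"
    unfolding W4_def f4_def by (simp add: welfare_prof[OF n2] sm_def)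
  have w5: "W5 = (if 1 \<le> f5 0 then 1 else 0) + (if m \<le> f5 1 then \<gamma> else 0)"
    unfolding W5_def f5_def by (simp add: welfare_prof[OF n2] sm_def)
  have b: "0 \<le> W1 \<and> W1 \<le> 2 \<and> 0 \<le> W2 \<and> W2 \<le> g \<and> 0 \<le> W3 \<and> W3 \<le> g \<and>
         0 \<le> W4 \<and> W4 \<le> \<gamma> \<and> 0 \<le> W5 \<and> W5 \<le> \<gamma>"
    using w1 w2 w3 w4 w5 s2 s3 s4 s5 gu m2 by (auto split: if_splits)
  have "W1 \<le> 1 \<or> W2 \<le> u \<or> W3 \<le> u \<or> W4 \<le> 1 \<or> W5 \<le> 1"
  proof (rule ccontr)
    assume "\<not> ?thesis"
    hence c: "1 < W1" "u < W2" "u < W3" "1 < W4" "1 < W5" by auto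
    have "1 \<le> f1 0" "1 \<le> f1 1" using c(1) w1 gu by (auto split: if_splits)
    moreover have "m \<le> f2 1" using c(2) w2 gu by (auto split: if_splits)
    moreover have "m \<le> f3 0" using c(3) w3 gu by (auto split: if_splits)
    moreover have "m \<le> f4 0" using c(4) w4 gu by (auto split: if_splits)
    moreover have "m \<le> f5 1" using c(5) w5 gu by (auto split: if_splits)
    ultimately show False
      using det_main[OF good m2 n2 gu(1,2), of g] gu
      unfolding f1_def f2_def f3_def f4_def f5_def by auto
  qed
  with b show ?thesis by blast
qed


lemma welfare_nonneg: "\<forall>i<n. single_minded m (vs i) \<Longrightarrow> 0 \<le> welfare n T S vs"
  unfolding welfare_def by (intro sum_nonneg) (meson lessThan_iff sm_bounds)

theorem theorem3p6:
  fixes M :: "('msg mech \<times> 'msg strategy) measure" and n m :: nat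
  assumes "m \<ge> 2" and "n \<ge> 2" and "prob_space M"
    and "AE z in M. good_mech n m (fst z) (snd z)"
    and "\<forall>vs. (\<forall>i<n. single_minded m (vs i)) \<longrightarrow>
           (\<lambda>z. welfare n (fst z) (snd z) vs) \<in> borel_measurable M"
  shows "\<forall>c < 6/5. \<exists>vs. (\<forall>i<n. single_minded m (vs i)) \<and>
           c * (\<integral>z. welfare n (fst z) (snd z) vs \<partial>M) < opt n m vs"
proof (intro allI impI)
  fix c :: real assume c65: "c < 6/5"
  note m2 = assms(1) and n2 = assms(2)
  interpret P: prob_space M by (rule assms(3))
  have m1: "1 \<le> m" using m2 by simp
  have smU1: "single_minded m (sm 1 1)" using sm_single[of 1 1 m] m1 by simp
  define P1 where "P1 = prof (sm 1 1) (sm 1 1)"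
  have sP1: "\<forall>i<n. single_minded m (P1 i)" unfolding P1_def using prof_single[OF smU1 smU1 m1] .
  have opt1: "2 \<le> opt n m P1"
    using opt_ge[OF n2 smU1 smU1, of "\<lambda>i. if i < 2 then 1 else 0"] m2
    unfolding P1_def by (simp add: sm_def)
  show "\<exists>vs. (\<forall>i<n. single_minded m (vs i)) \<and>
           c * (\<integral>z. welfare n (fst z) (snd z) vs \<partial>M) < opt n m vs"
  proof (cases "c \<le> 0")
    case True
    have "0 \<le> (\<integral>z. welfare n (fst z) (snd z) P1 \<partial>M)"
      by (intro integral_nonneg_AE AE_I2 welfare_nonneg[OF sP1])
    hence "c * (\<integral>z. welfare n (fst z) (snd z) P1 \<partial>M) \<le> 0"
      using True by (simp add: mult_nonpos_nonneg)
    with opt1 sP1 show ?thesis by (intro exI[of _ P1]) auto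
  next
    case False
    hence c0: "0 < c" by simp
    define K where "K = c / (6 - 5 * c) + 2"
    have d0: "0 < 6 - 5 * c" using c65 by simp
    have K2: "2 \<le> K" using c0 d0 unfolding K_def by simp
    have cK: "c / K < 6 - 5 * c"
    proof -
      have "c < K * (6 - 5 * c)"
      proof -
        have "K * (6 - 5 * c) = c + 2 * (6 - 5 * c)" unfolding K_def using d0 by (simp add: field_simps)
        thus ?thesis using d0 by simp
      qed
      thus ?thesis using K2 by (simp add: field_simps)
    qed
    define \<gamma> where "\<gamma> = K"
    define u where "u = K + 1"
    define g where "g = K * (K + 1)"
    have "1 * (K + 1) < K * (K + 1)" using K2 by (intro mult_strict_right_mono) auto
    hence gu: "1 < \<gamma>" "\<gamma> < u" "u < g" using K2 unfolding \<gamma>_def u_def g_def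
      by simp_all
    have smU2: "single_minded m (sm u 1)" using sm_single[of u 1 m] m1 gu by simp
    have smG: "single_minded m (sm g m)" using sm_single[of g m m] m1 gu by simp
    have smG': "single_minded m (sm \<gamma> m)" using sm_single[of \<gamma> m m] m1 gu by simp
    define P2 where "P2 = prof (sm u 1) (sm g m)"
    define P3 where "P3 = prof (sm g m) (sm u 1)"
    define P4 where "P4 = prof (sm \<gamma> m) (sm 1 1)"
    define P5 where "P5 = prof (sm 1 1) (sm \<gamma> m)"
    have sP2: "\<forall>i<n. single_minded m (P2 i)" unfolding P2_def using prof_single[OF smU2 smG m1] .
    have sP3: "\<forall>i<n. single_minded m (P3 i)" unfolding P3_def using prof_single[OF smG smU2 m1] .
    have sP4: "\<forall>i<n. single_minded m (P4 i)" unfolding P4_def using prof_single[OF smG' smU1 m1] .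
    have sP5: "\<forall>i<n. single_minded m (P5 i)" unfolding P5_def using prof_single[OF smU1 smG' m1] .
    have opt2: "g \<le> opt n m P2"
      using opt_ge[OF n2 smU2 smG, of "\<lambda>i. if i = 1 then m else 0"] m2
      unfolding P2_def by (simp add: sm_def)
    have opt3: "g \<le> opt n m P3"
      using opt_ge[OF n2 smG smU2, of "\<lambda>i. if i = 0 then m else 0"] m2
      unfolding P3_def by (simp add: sm_def)
    have opt4: "\<gamma> \<le> opt n m P4"
      using opt_ge[OF n2 smG' smU1, of "\<lambda>i. if i = 0 then m else 0"] m2
      unfolding P4_def by (simp add: sm_def)
    have opt5: "\<gamma> \<le> opt n m P5"
      using opt_ge[OF n2 smU1 smG', of "\<lambda>i. if i = 1 then m else 0"] m2
      unfolding P5_def by (simp add: sm_def)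
    define W1 where "W1 = (\<lambda>z::('msg mech \<times> 'msg strategy). welfare n (fst z) (snd z) P1)"
    define W2 where "W2 = (\<lambda>z::('msg mech \<times> 'msg strategy). welfare n (fst z) (snd z) P2)"
    define W3 where "W3 = (\<lambda>z::('msg mech \<times> 'msg strategy). welfare n (fst z) (snd z) P3)"
    define W4 where "W4 = (\<lambda>z::('msg mech \<times> 'msg strategy). welfare n (fst z) (snd z) P4)"
    define W5 where "W5 = (\<lambda>z::('msg mech \<times> 'msg strategy). welfare n (fst z) (snd z) P5)"
    have AEf: "AE z in M. 0 \<le> W1 z \<and> W1 z \<le> 2 \<and> 0 \<le> W2 z \<and> W2 z \<le> g \<and> 0 \<le> W3 z \<and> W3 z \<le> g \<and>
         0 \<le> W4 z \<and> W4 z \<le> \<gamma> \<and> 0 \<le> W5 z \<and> W5 z \<le> \<gamma> \<and>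
         (W1 z \<le> 1 \<or> W2 z \<le> u \<or> W3 z \<le> u \<or> W4 z \<le> 1 \<or> W5 z \<le> 1)"
      using assms(4)
    proof (rule eventually_mono)
      fix z :: "'msg mech \<times> 'msg strategy" assume "good_mech n m (fst z) (snd z)"
      from mech_facts[OF this m2 n2 gu]
      show "0 \<le> W1 z \<and> W1 z \<le> 2 \<and> 0 \<le> W2 z \<and> W2 z \<le> g \<and> 0 \<le> W3 z \<and> W3 z \<le> g \<and>
         0 \<le> W4 z \<and> W4 z \<le> \<gamma> \<and> 0 \<le> W5 z \<and> W5 z \<le> \<gamma> \<and>
         (W1 z \<le> 1 \<or> W2 z \<le> u \<or> W3 z \<le> u \<or> W4 z \<le> 1 \<or> W5 z \<le> 1)"
        unfolding W1_def W2_def W3_def W4_def W5_def P1_def P2_def P3_def P4_def P5_def .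
    qed
    have int1: "integrable M W1"
    proof (rule P.integrable_const_bound[where B=2])
      show "AE x in M. norm (W1 x) \<le> 2" using AEf by (rule eventually_mono) auto
      show "W1 \<in> borel_measurable M" using assms(5) sP1 unfolding W1_def by blast
    qed
    have int2: "integrable M W2"
    proof (rule P.integrable_const_bound[where B=g])
      show "AE x in M. norm (W2 x) \<le> g" using AEf by (rule eventually_mono) auto
      show "W2 \<in> borel_measurable M" using assms(5) sP2 unfolding W2_def by blast
    qed
    have int3: "integrable M W3"
    proof (rule P.integrable_const_bound[where B=g])
      show "AE x in M. norm (W3 x) \<le> g" using AEf by (rule eventually_mono) auto
      show "W3 \<in> borel_measurable M" using assms(5) sP3 unfolding W3_def by blast
    qed
    have int4: "integrable M W4"
    proof (rule P.integrable_const_bound[where B=\<gamma>])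
      show "AE x in M. norm (W4 x) \<le> \<gamma>" using AEf by (rule eventually_mono) auto
      show "W4 \<in> borel_measurable M" using assms(5) sP4 unfolding W4_def by blast
    qed
    have int5: "integrable M W5"
    proof (rule P.integrable_const_bound[where B=\<gamma>])
      show "AE x in M. norm (W5 x) \<le> \<gamma>" using AEf by (rule eventually_mono) auto
      show "W5 \<in> borel_measurable M" using assms(5) sP5 unfolding W5_def by blast
    qed
    show ?thesis
    proof (rule ccontr)
      assume na: "\<not> ?thesis"
      have E1: "2 \<le> c * integral\<^sup>L M W1" using na sP1 opt1 unfolding W1_def by force
      have E2: "g \<le> c * integral\<^sup>L M W2" using na sP2 opt2 unfolding W2_def by force
      have E3: "g \<le> c * integral\<^sup>L M W3" using na sP3 opt3 unfolding W3_def by force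
      have E4: "\<gamma> \<le> c * integral\<^sup>L M W4" using na sP4 opt4 unfolding W4_def by force
      have E5: "\<gamma> \<le> c * integral\<^sup>L M W5" using na sP5 opt5 unfolding W5_def by force
      define a where "a = 1 / (6 * g)"
      define b where "b = 1 / (6 * \<gamma>)"
      define \<Phi> where "\<Phi> = (\<lambda>z. W1 z * (1/6) + W2 z * a + W3 z * a + W4 z * b + W5 z * b)"
      have g0: "0 < g" and ga0: "0 < \<gamma>" using gu by auto
      have Kp: "0 < K" "0 < K + 1" using K2 by auto
      have "u * a = (K + 1) / ((6 * K) * (K + 1))" unfolding a_def u_def g_def by (simp add: mult.assoc)
      also have "\<dots> = 1 / (6 * K)" using Kp by simp
      finally have ua: "u * a = 1 / (6 * K)" .
      have ga: "g * a = 1 / 6" unfolding a_def using g0 by simp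
      have gb: "\<gamma> * b = 1 / 6" unfolding b_def using ga0 by simp
      have b1: "b = 1 / (6 * K)" unfolding b_def \<gamma>_def by simp
      have a0: "0 < a" and b0: "0 < b" unfolding a_def b_def using g0 ga0 by auto
      have intPhi: "integrable M \<Phi>" unfolding \<Phi>_def using int1 int2 int3 int4 int5 by simp
      have "AE z in M. \<Phi> z \<le> 5/6 + 1 / (6 * K)"
        using AEf
      proof (rule eventually_mono)
        fix z :: "'msg mech \<times> 'msg strategy"
        assume h: "0 \<le> W1 z \<and> W1 z \<le> 2 \<and> 0 \<le> W2 z \<and> W2 z \<le> g \<and> 0 \<le> W3 z \<and> W3 z \<le> g \<and>
         0 \<le> W4 z \<and> W4 z \<le> \<gamma> \<and> 0 \<le> W5 z \<and> W5 z \<le> \<gamma> \<and>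
         (W1 z \<le> 1 \<or> W2 z \<le> u \<or> W3 z \<le> u \<or> W4 z \<le> 1 \<or> W5 z \<le> 1)"
        have "W2 z * a \<le> g * a" "W3 z * a \<le> g * a" using h a0 by (auto intro!: mult_right_mono)
        hence x2: "W2 z * a \<le> 1/6" "W3 z * a \<le> 1/6" using ga by linarith+
        have "W4 z * b \<le> \<gamma> * b" "W5 z * b \<le> \<gamma> * b" using h b0 by (auto intro!: mult_right_mono)
        hence x4: "W4 z * b \<le> 1/6" "W5 z * b \<le> 1/6" using gb by linarith+
        have y2: "W2 z * a \<le> 1 / (6 * K)" if "W2 z \<le> u"
        proof -
          have "W2 z * a \<le> u * a" using that a0 by (auto intro!: mult_right_mono)
          thus ?thesis using ua by linarith
        qed
        have y3: "W3 z * a \<le> 1 / (6 * K)" if "W3 z \<le> u"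
        proof -
          have "W3 z * a \<le> u * a" using that a0 by (auto intro!: mult_right_mono)
          thus ?thesis using ua by linarith
        qed
        have y4: "W4 z * b \<le> 1 / (6 * K)" if "W4 z \<le> 1"
        proof -
          have "W4 z * b \<le> 1 * b" using that b0 by (auto intro!: mult_right_mono)
          thus ?thesis using b1 by linarith
        qed
        have y5: "W5 z * b \<le> 1 / (6 * K)" if "W5 z \<le> 1"
        proof -
          have "W5 z * b \<le> 1 * b" using that b0 by (auto intro!: mult_right_mono)
          thus ?thesis using b1 by linarith
        qed
        have "0 \<le> 1 / (6 * K)" using K2 by simp
        then show "\<Phi> z \<le> 5/6 + 1 / (6 * K)" unfolding \<Phi>_def using h x2 x4 y2 y3 y4 y5 by linarith
      qed
      hence "integral\<^sup>L M \<Phi> \<le> integral\<^sup>L M (\<lambda>z. 5/6 + 1 / (6 * K))"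
        by (intro integral_mono_AE intPhi) auto
      also have "\<dots> = 5/6 + 1 / (6 * K)" using P.prob_space by simp
      finally have up: "integral\<^sup>L M \<Phi> \<le> 5/6 + 1 / (6 * K)" .
      have eq: "integral\<^sup>L M \<Phi> = integral\<^sup>L M W1 * (1/6) + integral\<^sup>L M W2 * a + integral\<^sup>L M W3 * a
          + integral\<^sup>L M W4 * b + integral\<^sup>L M W5 * b"
        unfolding \<Phi>_def using int1 int2 int3 int4 int5 by simp
      have l1: "c * (integral\<^sup>L M W1 * (1/6)) \<ge> 1/3" using E1 by simp
      have "g * a \<le> (c * integral\<^sup>L M W2) * a" "g * a \<le> (c * integral\<^sup>L M W3) * a"
        using E2 E3 a0 by (auto intro!: mult_right_mono)
      hence l2: "c * (integral\<^sup>L M W2 * a) \<ge> 1/6" "c * (integral\<^sup>L M W3 * a) \<ge> 1/6"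
        using ga by (simp_all add: mult.assoc)
      have "\<gamma> * b \<le> (c * integral\<^sup>L M W4) * b" "\<gamma> * b \<le> (c * integral\<^sup>L M W5) * b"
        using E4 E5 b0 by (auto intro!: mult_right_mono)
      hence l4: "c * (integral\<^sup>L M W4 * b) \<ge> 1/6" "c * (integral\<^sup>L M W5 * b) \<ge> 1/6"
        using gb by (simp_all add: mult.assoc)
      have "1 \<le> c * integral\<^sup>L M \<Phi>" unfolding eq using l1 l2 l4 by (simp add: distrib_left)
      also have "\<dots> \<le> c * (5/6 + 1 / (6 * K))" using up c0 by simp
      finally have "6 \<le> 5 * c + c / K" using K2 by (simp add: field_simps)
      thus False using cK by simp
    qed
  qed
qed

end
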